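(* Let $\mathcal{P}$ be a nonempty finite poset with $n=|\mathcal{P}|$, let $m=\max_{p\in\mathcal{P}}(|{\downarrow}p|+|{\uparrow}p|)$, and let $\mathcal{A},\mathcal{B}$ be dual families of downsets over $\mathcal{L}(\mathcal{P})$. Then $$\sum_{A\in\mathcal{A}}(3/4)^{|A|/m^2}+\sum_{B\in\mathcal{B}}e^{-(n-|B|)/m}\ \ge\ 1.$$
   Context: For a finite poset $\mathcal{P}$, $\mathcal{L}(\mathcal{P})$ is the lattice of all downsets of $\mathcal{P}$ ordered by inclusion. ${\downarrow}p=\{q:q\le p\}$, ${\uparrow}p=\{q:q\ge p\}$ (both contain $p$, so $m\ge2$). Two families $\mathcal{A},\mathcal{B}$ of downsets of $\mathcal{P}$ are dual over $\mathcal{L}(\mathcal{P})$ if $A\not\subseteq B$ for all $A\in\mathcal{A},B\in\mathcal{B}$, and for every downset $X$ of $\mathcal{P}$ either $X\subseteq B$ for some $B\in\mathcal{B}$ or $A\subseteq X$ for some $A\in\mathcal{A}$. *)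

theory Defs
  imports Complex_Main
begin

definition partial_order_on' :: "'a set \<Rightarrow> ('a \<Rightarrow> 'a \<Rightarrow> bool) \<Rightarrow> bool" where
  "partial_order_on' P le \<longleftrightarrow>
     (\<forall>x\<in>P. le x x) \<and>
     (\<forall>x\<in>P. \<forall>y\<in>P. le x y \<and> le y x \<longrightarrow> x = y) \<and>
     (\<forall>x\<in>P. \<forall>y\<in>P. \<forall>z\<in>P. le x y \<and> le y z \<longrightarrow> le x z)"

definition downset :: "'a set \<Rightarrow> ('a \<Rightarrow> 'a \<Rightarrow> bool) \<Rightarrow> 'a set \<Rightarrow> bool" where
  "downset P le D \<longleftrightarrow> D \<subseteq> P \<and> (\<forall>x\<in>D. \<forall>y\<in>P. le y x \<longrightarrow> y \<in> D)"

definition down :: "'a set \<Rightarrow> ('a \<Rightarrow> 'a \<Rightarrow> bool) \<Rightarrow> 'a \<Rightarrow> 'a set" where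
  "down P le p = {q\<in>P. le q p}"

definition up :: "'a set \<Rightarrow> ('a \<Rightarrow> 'a \<Rightarrow> bool) \<Rightarrow> 'a \<Rightarrow> 'a set" where
  "up P le p = {q\<in>P. le p q}"

definition dual_families :: "'a set \<Rightarrow> ('a \<Rightarrow> 'a \<Rightarrow> bool) \<Rightarrow> 'a set set \<Rightarrow> 'a set set \<Rightarrow> bool" where
  "dual_families P le \<A> \<B> \<longleftrightarrow>
     (\<forall>A\<in>\<A>. downset P le A) \<and> (\<forall>B\<in>\<B>. downset P le B) \<and>
     (\<forall>A\<in>\<A>. \<forall>B\<in>\<B>. \<not> A \<subseteq> B) \<and>
     (\<forall>X. downset P le X \<longrightarrow> (\<exists>B\<in>\<B>. X \<subseteq> B) \<or> (\<exists>A\<in>\<A>. A \<subseteq> X))"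

end

theory Submission
  imports Defs
begin

definition wt :: "real \<Rightarrow> 'a set \<Rightarrow> 'a set \<Rightarrow> real" where
  "wt q T S = q ^ card S * (1 - q) ^ card (T - S)"

lemma wt_nonneg: "0 \<le> q \<Longrightarrow> q \<le> 1 \<Longrightarrow> 0 \<le> wt q T S"
  unfolding wt_def by simp

lemma sum_Pow_split:
  assumes "finite X" "finite Y" "X \<inter> Y = {}"
  shows "(\<Sum>S\<in>Pow (X \<union> Y). g S) = (\<Sum>S1\<in>Pow X. \<Sum>S2\<in>Pow Y. g (S1 \<union> S2))"
proof -
  have inj: "inj_on (\<lambda>(a,b). a \<union> b) (Pow X \<times> Pow Y)"
  proof (rule inj_onI)
    fix u v assume u: "u \<in> Pow X \<times> Pow Y" and v: "v \<in> Pow X \<times> Pow Y"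
      and e: "(\<lambda>(a,b). a \<union> b) u = (\<lambda>(a,b). a \<union> b) v"
    obtain a b where ab: "u = (a, b)" by (cases u)
    obtain c d where cd: "v = (c, d)" by (cases v)
    have h: "a \<subseteq> X" "b \<subseteq> Y" "c \<subseteq> X" "d \<subseteq> Y" using u v ab cd by auto
    have e2: "a \<union> b = c \<union> d" using e ab cd by simp
    have "a = (a \<union> b) \<inter> X" using h assms(3) by auto
    also have "\<dots> = c" using e2 h assms(3) by auto
    finally have 1: "a = c" .
    have "b = (a \<union> b) \<inter> Y" using h assms(3) by auto
    also have "\<dots> = d" using e2 h assms(3) by auto
    finally have 2: "b = d" .
    show "u = v" using ab cd 1 2 by simp
  qed
  have img: "(\<lambda>(a,b). a \<union> b) ` (Pow X \<times> Pow Y) = Pow (X \<union> Y)"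
  proof
    show "(\<lambda>(a,b). a \<union> b) ` (Pow X \<times> Pow Y) \<subseteq> Pow (X \<union> Y)" by auto
    show "Pow (X \<union> Y) \<subseteq> (\<lambda>(a,b). a \<union> b) ` (Pow X \<times> Pow Y)"
    proof
      fix S assume "S \<in> Pow (X \<union> Y)"
      then have "S = (\<lambda>(a,b). a \<union> b) (S \<inter> X, S \<inter> Y)" by auto
      moreover have "(S \<inter> X, S \<inter> Y) \<in> Pow X \<times> Pow Y" by auto
      ultimately show "S \<in> (\<lambda>(a,b). a \<union> b) ` (Pow X \<times> Pow Y)" by blast
    qed
  qed
  have "(\<Sum>S\<in>Pow (X \<union> Y). g S) = (\<Sum>p\<in>Pow X \<times> Pow Y. g ((\<lambda>(a,b). a \<union> b) p))"
    using sum.reindex[OF inj, of g] img by simp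
  also have "\<dots> = (\<Sum>S1\<in>Pow X. \<Sum>S2\<in>Pow Y. g (S1 \<union> S2))"
    by (simp add: sum.cartesian_product split_def)
  finally show ?thesis .
qed

lemma wt_split:
  assumes "finite X" "finite Y" "X \<inter> Y = {}" "S1 \<subseteq> X" "S2 \<subseteq> Y"
  shows "wt q (X \<union> Y) (S1 \<union> S2) = wt q X S1 * wt q Y S2"
proof -
  have fin1: "finite S1" "finite S2" using assms finite_subset by blast+
  have c1: "card (S1 \<union> S2) = card S1 + card S2"
    using fin1 assms by (intro card_Un_disjoint) auto
  have e: "(X \<union> Y) - (S1 \<union> S2) = (X - S1) \<union> (Y - S2)" using assms by blast
  have c2: "card ((X - S1) \<union> (Y - S2)) = card (X - S1) + card (Y - S2)"
    using assms by (intro card_Un_disjoint) auto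
  show ?thesis unfolding wt_def e c1 c2 by (simp add: power_add algebra_simps)
qed

lemma split_prod:
  assumes "finite X" "finite Y" "X \<inter> Y = {}" "Z = X \<union> Y"
  shows "(\<Sum>S\<in>Pow Z. if f (S \<inter> X) \<and> g (S \<inter> Y) then wt q Z S else 0)
       = (\<Sum>S\<in>Pow X. if f S then wt q X S else 0) * (\<Sum>S\<in>Pow Y. if g S then wt q Y S else 0)"
proof -
  have "(\<Sum>S\<in>Pow Z. if f (S \<inter> X) \<and> g (S \<inter> Y) then wt q Z S else 0)
     = (\<Sum>S1\<in>Pow X. \<Sum>S2\<in>Pow Y. if f ((S1 \<union> S2) \<inter> X) \<and> g ((S1 \<union> S2) \<inter> Y) then wt q (X \<union> Y) (S1 \<union> S2) else 0)"
    unfolding assms(4) by (rule sum_Pow_split[OF assms(1-3)])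
  also have "\<dots> = (\<Sum>S1\<in>Pow X. \<Sum>S2\<in>Pow Y. (if f S1 then wt q X S1 else 0) * (if g S2 then wt q Y S2 else 0))"
  proof (intro sum.cong refl)
    fix S1 S2 assume h: "S1 \<in> Pow X" "S2 \<in> Pow Y"
    have a: "(S1 \<union> S2) \<inter> X = S1" "(S1 \<union> S2) \<inter> Y = S2" using h assms(3) by auto
    show "(if f ((S1 \<union> S2) \<inter> X) \<and> g ((S1 \<union> S2) \<inter> Y) then wt q (X \<union> Y) (S1 \<union> S2) else 0)
        = (if f S1 then wt q X S1 else 0) * (if g S2 then wt q Y S2 else 0)"
      unfolding a using wt_split[OF assms(1-3)] h by auto
  qed
  also have "\<dots> = (\<Sum>S\<in>Pow X. if f S then wt q X S else 0) * (\<Sum>S\<in>Pow Y. if g S then wt q Y S else 0)"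
    by (rule sum_product[symmetric])
  finally show ?thesis .
qed

lemma wt_total:
  assumes "finite T"
  shows "(\<Sum>S\<in>Pow T. wt q T S) = 1"
  using assms
proof (induction T rule: finite_induct)
  case empty
  then show ?case by (simp add: wt_def)
next
  case (insert x F)
  have "(\<Sum>S\<in>Pow (insert x F). wt q (insert x F) S)
      = (\<Sum>S\<in>Pow (insert x F). if (\<lambda>_. True) (S \<inter> {x}) \<and> (\<lambda>_. True) (S \<inter> F) then wt q (insert x F) S else 0)"
    by simp
  also have "\<dots> = (\<Sum>S\<in>Pow {x}. if True then wt q {x} S else 0) * (\<Sum>S\<in>Pow F. if True then wt q F S else 0)"
    by (rule split_prod) (use insert in auto)
  also have "\<dots> = 1"
  proof -
    have "Pow {x} = {{}, {x}}" by blast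
    then show ?thesis using insert by (simp add: wt_def)
  qed
  finally show ?case .
qed

lemma nonempty_part:
  assumes "finite X"
  shows "(\<Sum>S\<in>Pow X. if S \<noteq> {} then wt q X S else 0) = 1 - (1 - q) ^ card X"
proof -
  have "(\<Sum>S\<in>Pow X. wt q X S) = (\<Sum>S\<in>Pow X. (if S = {} then wt q X S else 0) + (if S \<noteq> {} then wt q X S else 0))"
    by (intro sum.cong) auto
  also have "\<dots> = wt q X {} + (\<Sum>S\<in>Pow X. if S \<noteq> {} then wt q X S else 0)"
    using assms by (simp add: sum.distrib sum.delta)
  finally show ?thesis using wt_total[OF assms, of q] by (simp add: wt_def)
qed

lemma blocks:
  fixes C :: "'b \<Rightarrow> 'a set"
  assumes "finite K" "\<forall>k\<in>K. finite (C k)" "\<forall>j\<in>K. \<forall>k\<in>K. j \<noteq> k \<longrightarrow> C j \<inter> C k = {}"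
    "\<forall>k\<in>K. (1 - q) ^ card (C k) \<ge> 1/4" "0 \<le> q" "q \<le> 1"
  shows "(\<Sum>S\<in>Pow (\<Union>(C`K)). if (\<forall>k\<in>K. S \<inter> C k \<noteq> {}) then wt q (\<Union>(C`K)) S else 0) \<le> (3/4) ^ card K"
  using assms(1-4)
proof (induction K rule: finite_induct)
  case empty
  then show ?case by (simp add: wt_def)
next
  case (insert k K)
  define X where "X = C k"
  define Y where "Y = \<Union>(C`K)"
  have finX: "finite X" using insert X_def by auto
  have finY: "finite Y" using insert Y_def by auto
  have disj: "X \<inter> Y = {}"
  proof -
    have "C k \<inter> C j = {}" if "j \<in> K" for j
      using insert.prems(2) insert.hyps(2) that by (metis insertCI)
    then show ?thesis unfolding X_def Y_def by blast
  qed
  have Z: "\<Union>(C`insert k K) = X \<union> Y" unfolding X_def Y_def by auto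
  have "(\<Sum>S\<in>Pow (\<Union>(C`insert k K)). if (\<forall>j\<in>insert k K. S \<inter> C j \<noteq> {}) then wt q (\<Union>(C`insert k K)) S else 0)
     = (\<Sum>S\<in>Pow (\<Union>(C`insert k K)). if (\<lambda>S. S \<noteq> {}) (S \<inter> X) \<and> (\<lambda>S. \<forall>j\<in>K. S \<inter> C j \<noteq> {}) (S \<inter> Y) then wt q (\<Union>(C`insert k K)) S else 0)"
  proof (intro sum.cong refl)
    fix S assume "S \<in> Pow (\<Union>(C`insert k K))"
    have "(\<forall>j\<in>insert k K. S \<inter> C j \<noteq> {}) \<longleftrightarrow> (S \<inter> X \<noteq> {}) \<and> (\<forall>j\<in>K. (S \<inter> Y) \<inter> C j \<noteq> {})"
      unfolding X_def Y_def by blast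
    then show "(if (\<forall>j\<in>insert k K. S \<inter> C j \<noteq> {}) then wt q (\<Union>(C`insert k K)) S else 0)
      = (if (\<lambda>S. S \<noteq> {}) (S \<inter> X) \<and> (\<lambda>S. \<forall>j\<in>K. S \<inter> C j \<noteq> {}) (S \<inter> Y) then wt q (\<Union>(C`insert k K)) S else 0)"
      by simp
  qed
  also have "\<dots> = (\<Sum>S\<in>Pow X. if S \<noteq> {} then wt q X S else 0) * (\<Sum>S\<in>Pow Y. if (\<forall>j\<in>K. S \<inter> C j \<noteq> {}) then wt q Y S else 0)"
    by (rule split_prod[OF finX finY disj Z])
  also have "\<dots> \<le> (3/4) * (3/4) ^ card K"
  proof (rule mult_mono)
    show "(\<Sum>S\<in>Pow X. if S \<noteq> {} then wt q X S else 0) \<le> 3/4"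
      using nonempty_part[OF finX, of q] insert.prems(3) X_def by auto
    show "(\<Sum>S\<in>Pow Y. if (\<forall>j\<in>K. S \<inter> C j \<noteq> {}) then wt q Y S else 0) \<le> (3/4) ^ card K"
      unfolding Y_def
    proof (rule insert.IH)
      show "\<forall>k\<in>K. finite (C k)" using insert.prems(1) by blast
      show "\<forall>j\<in>K. \<forall>k\<in>K. j \<noteq> k \<longrightarrow> C j \<inter> C k = {}" using insert.prems(2) by blast
      show "\<forall>k\<in>K. 1 / 4 \<le> (1 - q) ^ card (C k)" using insert.prems(3) by blast
    qed
    show "0 \<le> (3/4::real)" by simp
    show "0 \<le> (\<Sum>S\<in>Pow Y. if (\<forall>j\<in>K. S \<inter> C j \<noteq> {}) then wt q Y S else 0)"
      by (intro sum_nonneg) (simp add: wt_nonneg assms(5,6))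
  qed
  also have "\<dots> = (3/4) ^ card (insert k K)" using insert by simp
  finally show ?case .
qed

lemma greedy:
  assumes po: "partial_order_on' P le" and "finite A" "A \<subseteq> P" and finP: "finite P"
    and bd: "\<forall>c\<in>P. card (down P le c) \<le> M \<and> card (up P le c) \<le> M"
  shows "\<exists>A'\<subseteq>A. (\<forall>a\<in>A'. \<forall>b\<in>A'. a \<noteq> b \<longrightarrow> up P le a \<inter> up P le b = {}) \<and> card A \<le> M*M*card A'"
  using assms(2,3)
proof (induction A rule: finite_psubset_induct)
  case (psubset A)
  show ?case
  proof (cases "A = {}")
    case True then show ?thesis by auto
  next
    case False
    then obtain a where a: "a \<in> A" by auto
    define N where "N = {b\<in>A. up P le a \<inter> up P le b \<noteq> {}}"
    have aP: "a \<in> P" using a psubset by auto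
    have "le a a" using aP po unfolding partial_order_on'_def by blast
    then have "a \<in> up P le a" using aP unfolding up_def by blast
    then have aN: "a \<in> N" using a unfolding N_def by blast
    have NA: "N \<subseteq> A" by (auto simp: N_def)
    have Nsub: "N \<subseteq> (\<Union>c\<in>up P le a. down P le c)"
    proof
      fix b assume "b \<in> N"
      then have bA: "b \<in> A" and ne: "up P le a \<inter> up P le b \<noteq> {}" unfolding N_def by auto
      then obtain c where c: "c \<in> up P le a" "c \<in> up P le b" by blast
      have "b \<in> P" using bA psubset.prems by blast
      then have "b \<in> down P le c" using c(2) unfolding up_def down_def by blast
      then show "b \<in> (\<Union>c\<in>up P le a. down P le c)" using c(1) by blast
    qed
    have cN: "card N \<le> M*M"
    proof -
      have "(\<Union>c\<in>up P le a. down P le c) \<subseteq> P" by (auto simp: down_def)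
      then have "finite (\<Union>c\<in>up P le a. down P le c)" using finP finite_subset by blast
      then have "card N \<le> card (\<Union>c\<in>up P le a. down P le c)"
        using Nsub by (intro card_mono)
      also have "\<dots> \<le> (\<Sum>c\<in>up P le a. card (down P le c))" by (intro card_UN_le) (simp add: up_def finP)
      also have "\<dots> \<le> (\<Sum>c\<in>up P le a. M)" by (intro sum_mono) (auto simp: up_def bd)
      also have "\<dots> = card (up P le a) * M" by simp
      also have "\<dots> \<le> M*M" using bd aP by simp
      finally show ?thesis .
    qed
    have "A - N \<subset> A" using aN NA by auto
    then obtain A'' where A'': "A'' \<subseteq> A - N" "\<forall>a\<in>A''. \<forall>b\<in>A''. a \<noteq> b \<longrightarrow> up P le a \<inter> up P le b = {}"
        "card (A - N) \<le> M*M*card A''"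
      using psubset.IH[of "A - N"] psubset.prems by blast
    have anA: "a \<notin> A''" using A'' aN by auto
    have fin: "finite A''" using A''(1) psubset.hyps finite_subset by blast
    have finN: "finite N" using NA psubset.hyps finite_subset by blast
    have cA: "card A = card N + card (A - N)"
      using card_Diff_subset[OF finN NA] card_mono[OF psubset.hyps NA] by simp
    have "card A \<le> M*M + M*M*card A''" using cA cN A''(3) by linarith
    also have "\<dots> = M*M*card (insert a A'')" using anA fin by simp
    finally have c: "card A \<le> M*M*card (insert a A'')" .
    have d: "\<forall>x\<in>insert a A''. \<forall>y\<in>insert a A''. x \<noteq> y \<longrightarrow> up P le x \<inter> up P le y = {}"
    proof (intro ballI impI)
      fix x y assume xy: "x \<in> insert a A''" "y \<in> insert a A''" "x \<noteq> y"
      have h: "up P le a \<inter> up P le b = {}" if "b \<in> A''" for b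
        using that A''(1) unfolding N_def by auto
      show "up P le x \<inter> up P le y = {}"
      proof (cases "x = a")
        case True
        then have "y \<in> A''" using xy by auto
        then show ?thesis using h True by blast
      next
        case False
        then have x: "x \<in> A''" using xy by auto
        show ?thesis
        proof (cases "y = a")
          case True
          then show ?thesis using h[OF x] by blast
        next
          case False
          then have "y \<in> A''" using xy by auto
          then show ?thesis using A''(2) x xy(3) by blast
        qed
      qed
    qed
    show ?thesis using c d A''(1) a by (intro exI[of _ "insert a A''"]) auto
  qed
qed

lemma aux_quarter:
  assumes "a * b = (1::real)" "0 < b" "b \<le> 4" shows "1/4 \<le> a"
proof -
  have "a = 1 / b" using assms by (simp add: eq_divide_eq)
  moreover have "1 / 4 \<le> 1 / b" using divide_left_mono[of b 4 1] assms by simp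
  ultimately show ?thesis by simp
qed

lemma quarter:
  assumes "m \<ge> (2::nat)" "k \<le> m - 1"
  shows "(1 - 1 / real m) ^ k \<ge> 1/4"
proof -
  obtain j where j: "m = Suc j" "j \<ge> 1" using assms(1) by (cases m) auto
  have x0: "0 \<le> 1 - 1 / real m" "1 - 1 / real m \<le> 1" using assms(1) by auto
  have "(1 - 1 / real m) ^ j \<le> (1 - 1 / real m) ^ k"
    using power_decreasing[OF _ x0] assms(2) j by simp
  moreover have "(1 - 1 / real m) ^ j \<ge> 1/4"
  proof -
    have jp: "real j > 0" using j by simp
    have e: "(1 - 1 / real m) * (1 + 1 / real j) = 1" proof -
      have "real j + real j * real j \<noteq> 0" using jp by (smt (verit) mult_pos_pos)
      then show ?thesis using j jp by (simp add: field_simps)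
    qed
    have "(1 + 1 / real j) ^ j \<le> exp (1 / real j) ^ j"
      using exp_ge_add_one_self[of "1/real j"] by (intro power_mono) (auto simp: add.commute)
    also have "\<dots> = exp (real j * (1 / real j))" using exp_of_nat_mult[of j "1/real j"] by simp
    also have "\<dots> = exp 1" using j by simp
    also have "\<dots> \<le> 4" using exp_le by simp
    finally have b: "(1 + 1 / real j) ^ j \<le> 4" .
    have "(1 - 1 / real m) ^ j * (1 + 1 / real j) ^ j = 1" using e by (simp add: power_mult_distrib[symmetric])
    moreover have "(1 + 1 / real j) ^ j > 0" using jp by (intro zero_less_power) (smt (verit) divide_pos_pos)
    ultimately show ?thesis using b aux_quarter by blast
  qed
  ultimately show ?thesis by simp
qed

theorem lemma4:
  fixes P :: "'a set" and le :: "'a \<Rightarrow> 'a \<Rightarrow> bool"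
    and \<A> \<B> :: "'a set set" and n m :: nat
  assumes "finite P" and "P \<noteq> {}" and "partial_order_on' P le"
    and "n = card P"
    and "m = Max ((\<lambda>p. card (down P le p) + card (up P le p)) ` P)"
    and "dual_families P le \<A> \<B>"
  shows "(\<Sum>A\<in>\<A>. (3/4::real) powr (real (card A) / real m ^ 2))
         + (\<Sum>B\<in>\<B>. exp (- (real n - real (card B)) / real m)) \<ge> 1"
proof -
  note finP = assms(1) and po = assms(3) and df = assms(6)
  have refl: "\<forall>x\<in>P. le x x" and trans: "\<forall>x\<in>P. \<forall>y\<in>P. \<forall>z\<in>P. le x y \<and> le y z \<longrightarrow> le x z"
    using po unfolding partial_order_on'_def by blast+
  have mbd: "\<forall>p\<in>P. card (down P le p) + card (up P le p) \<le> m"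
  proof
    fix p assume "p \<in> P"
    then show "card (down P le p) + card (up P le p) \<le> m"
      unfolding assms(5) using finP by (intro Max_ge) auto
  qed
  have ge1: "card (down P le p) \<ge> 1" "card (up P le p) \<ge> 1" if "p \<in> P" for p
  proof -
    have "p \<in> down P le p" "p \<in> up P le p" using that refl by (auto simp: down_def up_def)
    moreover have "finite (down P le p)" "finite (up P le p)" using finP by (auto simp: down_def up_def)
    ultimately show "card (down P le p) \<ge> 1" "card (up P le p) \<ge> 1"
      by (auto simp: Suc_le_eq card_gt_0_iff)
  qed
  obtain p0 where p0: "p0 \<in> P" using assms(2) by auto
  have m2: "m \<ge> 2"
  proof -
    have "card (down P le p0) + card (up P le p0) \<le> m" using mbd p0 by blast
    then show ?thesis using ge1[OF p0] by linarith
  qed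
  define q where "q = 1 / real m"
  have q01: "0 \<le> q" "q \<le> 1" using m2 by (auto simp: q_def)
  define D where "D S = {y\<in>P. \<exists>x\<in>S. le y x}" for S
  have Ddown: "downset P le (D S)" if "S \<subseteq> P" for S
  proof -
    have "\<forall>x\<in>D S. \<forall>y\<in>P. le y x \<longrightarrow> y \<in> D S"
    proof (intro ballI impI)
      fix x y assume "x \<in> D S" "y \<in> P" "le y x"
      then obtain s where "s \<in> S" "le x s" "x \<in> P" unfolding D_def by auto
      then have "le y s" using trans \<open>y \<in> P\<close> \<open>le y x\<close> that by blast
      then show "y \<in> D S" using \<open>y \<in> P\<close> \<open>s \<in> S\<close> unfolding D_def by auto
    qed
    then show ?thesis unfolding downset_def D_def by auto
  qed
  have c: "(\<forall>A\<in>\<A>. downset P le A) \<and> (\<forall>B\<in>\<B>. downset P le B) \<and>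
     (\<forall>A\<in>\<A>. \<forall>B\<in>\<B>. \<not> A \<subseteq> B) \<and>
     (\<forall>X. downset P le X \<longrightarrow> (\<exists>B\<in>\<B>. X \<subseteq> B) \<or> (\<exists>A\<in>\<A>. A \<subseteq> X))"
    using df unfolding dual_families_def .
  have dA: "\<forall>A\<in>\<A>. downset P le A" using c by (rule conjunct1)
  have BP: "\<forall>B\<in>\<B>. downset P le B" using c by (rule conjunct1[OF conjunct2])
  have dX: "\<forall>X. downset P le X \<longrightarrow> (\<exists>B\<in>\<B>. X \<subseteq> B) \<or> (\<exists>A\<in>\<A>. A \<subseteq> X)"
    using c by (rule conjunct2[OF conjunct2[OF conjunct2]])
  have AP: "\<forall>A\<in>\<A>. A \<subseteq> P" using dA unfolding downset_def by blast
  have BP': "\<forall>B\<in>\<B>. B \<subseteq> P" using BP unfolding downset_def by blast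
  have "\<A> \<subseteq> Pow P" using AP by blast
  then have finA: "finite \<A>" using finP finite_subset by blast
  have "\<B> \<subseteq> Pow P" using BP' by blast
  then have finB: "finite \<B>" using finP finite_subset by blast
  define sA where "sA S = (\<Sum>A\<in>\<A>. if A \<subseteq> D S then wt q P S else 0)" for S
  define sB where "sB S = (\<Sum>B\<in>\<B>. if D S \<subseteq> B then wt q P S else 0)" for S
  have key: "wt q P S \<le> sA S + sB S" if "S \<in> Pow P" for S
  proof -
    have nA: "0 \<le> sA S" unfolding sA_def by (intro sum_nonneg) (simp add: wt_nonneg q01)
    have nB: "0 \<le> sB S" unfolding sB_def by (intro sum_nonneg) (simp add: wt_nonneg q01)
    have "downset P le (D S)" using Ddown that by blast
    then have "(\<exists>B\<in>\<B>. D S \<subseteq> B) \<or> (\<exists>A\<in>\<A>. A \<subseteq> D S)"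
      using dX by blast
    then show ?thesis
    proof
      assume "\<exists>B\<in>\<B>. D S \<subseteq> B"
      then obtain B where B: "B \<in> \<B>" "D S \<subseteq> B" by auto
      have "wt q P S = (if D S \<subseteq> B then wt q P S else 0)" using B by simp
      also have "\<dots> \<le> sB S" unfolding sB_def
        by (rule member_le_sum[OF B(1) _ finB]) (simp add: wt_nonneg q01)
      finally show ?thesis using nA by simp
    next
      assume "\<exists>A\<in>\<A>. A \<subseteq> D S"
      then obtain A where A: "A \<in> \<A>" "A \<subseteq> D S" by auto
      have "wt q P S = (if A \<subseteq> D S then wt q P S else 0)" using A by simp
      also have "\<dots> \<le> sA S" unfolding sA_def
        by (rule member_le_sum[OF A(1) _ finA]) (simp add: wt_nonneg q01)
      finally show ?thesis using nB by simp
    qed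
  qed
  have Abound: "(\<Sum>S\<in>Pow P. if A \<subseteq> D S then wt q P S else 0) \<le> (3/4) powr (real (card A) / real m ^ 2)"
    if A: "A \<in> \<A>" for A
  proof -
    have AsP: "A \<subseteq> P" using AP A by auto
    have finAA: "finite A" using AsP finP finite_subset by blast
    have bd: "\<forall>c\<in>P. card (down P le c) \<le> m \<and> card (up P le c) \<le> m" using mbd by fastforce
    obtain A' where A': "A' \<subseteq> A" "\<forall>a\<in>A'. \<forall>b\<in>A'. a \<noteq> b \<longrightarrow> up P le a \<inter> up P le b = {}"
      "card A \<le> m*m*card A'"
      using greedy[OF po finAA AsP finP bd] by blast
    define U where "U = \<Union>(up P le ` A')"
    have UP: "U \<subseteq> P" by (auto simp: U_def up_def)
    have finU: "finite U" using UP finP finite_subset by blast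
    have finA': "finite A'" using A'(1) finAA finite_subset by blast
    have "(\<Sum>S\<in>Pow P. if A \<subseteq> D S then wt q P S else 0)
       \<le> (\<Sum>S\<in>Pow P. if (\<lambda>S. \<forall>a\<in>A'. S \<inter> up P le a \<noteq> {}) (S \<inter> U) \<and> (\<lambda>_. True) (S \<inter> (P - U)) then wt q P S else 0)"
    proof (intro sum_mono)
      fix S assume S: "S \<in> Pow P"
      have "\<forall>a\<in>A'. (S \<inter> U) \<inter> up P le a \<noteq> {}" if h: "A \<subseteq> D S"
      proof
        fix a assume a: "a \<in> A'"
        then have "a \<in> D S" using h A'(1) by auto
        then obtain x where "x \<in> S" "le a x" "a \<in> P" unfolding D_def by auto
        then have "x \<in> up P le a" using S by (auto simp: up_def)
        then show "(S \<inter> U) \<inter> up P le a \<noteq> {}" using a \<open>x \<in> S\<close> unfolding U_def by auto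
      qed
      then show "(if A \<subseteq> D S then wt q P S else 0)
        \<le> (if (\<lambda>S. \<forall>a\<in>A'. S \<inter> up P le a \<noteq> {}) (S \<inter> U) \<and> (\<lambda>_. True) (S \<inter> (P - U)) then wt q P S else 0)"
        by (auto simp: wt_nonneg q01)
    qed
    also have "\<dots> = (\<Sum>S\<in>Pow U. if (\<forall>a\<in>A'. S \<inter> up P le a \<noteq> {}) then wt q U S else 0)
        * (\<Sum>S\<in>Pow (P - U). if True then wt q (P - U) S else 0)"
      by (rule split_prod) (use finU finP UP in auto)
    also have "\<dots> = (\<Sum>S\<in>Pow U. if (\<forall>a\<in>A'. S \<inter> up P le a \<noteq> {}) then wt q U S else 0)"
      using wt_total[of "P - U" q] finP by simp
    also have "\<dots> \<le> (3/4) ^ card A'"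
      unfolding U_def
    proof (rule blocks[OF finA' _ A'(2) _ q01])
      show "\<forall>k\<in>A'. finite (up P le k)" using finP by (auto simp: up_def)
      show "\<forall>k\<in>A'. 1 / 4 \<le> (1 - q) ^ card (up P le k)"
      proof
        fix k assume k: "k \<in> A'"
        then have kP: "k \<in> P" using A'(1) AsP by auto
        have "card (up P le k) \<le> m - 1" using mbd kP ge1[OF kP] by fastforce
        then show "1 / 4 \<le> (1 - q) ^ card (up P le k)" unfolding q_def by (rule quarter[OF m2])
      qed
    qed
    also have "\<dots> = (3/4) powr (real (card A'))" by (simp add: powr_realpow)
    also have "\<dots> \<le> (3/4) powr (real (card A) / real m ^ 2)"
    proof (rule powr_mono')
      have mp: "real m ^ 2 > 0" using m2 by simp
      have "real (card A) \<le> real m ^ 2 * real (card A')"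
        using A'(3) by (simp add: power2_eq_square) (metis of_nat_le_iff of_nat_mult)
      then show "real (card A) / real m ^ 2 \<le> real (card A')"
        using mp by (simp add: divide_le_eq mult.commute)
    qed auto
    finally show ?thesis .
  qed
  have Bbound: "(\<Sum>S\<in>Pow P. if D S \<subseteq> B then wt q P S else 0) \<le> exp (- (real n - real (card B)) / real m)"
    if B: "B \<in> \<B>" for B
  proof -
    have BsP: "B \<subseteq> P" using BP' B by blast
    have finBB: "finite B" using BsP finP finite_subset by blast
    have "(\<Sum>S\<in>Pow P. if D S \<subseteq> B then wt q P S else 0)
       \<le> (\<Sum>S\<in>Pow P. if (\<lambda>_. True) (S \<inter> B) \<and> (\<lambda>S. S = {}) (S \<inter> (P - B)) then wt q P S else 0)"
    proof (intro sum_mono)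
      fix S assume S: "S \<in> Pow P"
      have "S \<subseteq> D S" using S refl unfolding D_def by auto
      then have i: "D S \<subseteq> B \<Longrightarrow> S \<inter> (P - B) = {}" by blast
      have w0: "0 \<le> wt q P S" using wt_nonneg q01 by blast
      show "(if D S \<subseteq> B then wt q P S else 0)
        \<le> (if (\<lambda>_. True) (S \<inter> B) \<and> (\<lambda>S. S = {}) (S \<inter> (P - B)) then wt q P S else 0)"
        using i w0 by simp
    qed
    also have "\<dots> = (\<Sum>S\<in>Pow B. if True then wt q B S else 0)
        * (\<Sum>S\<in>Pow (P - B). if S = {} then wt q (P - B) S else 0)"
      by (rule split_prod) (use finBB finP BsP in auto)
    also have "\<dots> = (1 - q) ^ card (P - B)"
    proof -
      have e1: "(\<Sum>S\<in>Pow B. if True then wt q B S else 0) = 1" using wt_total[OF finBB, of q] by simp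
      have fPB: "finite (Pow (P - B))" using finP by simp
      have e2: "(\<Sum>S\<in>Pow (P - B). if S = {} then wt q (P - B) S else 0) = wt q (P - B) {}"
        using sum.delta[OF fPB, of "{}" "wt q (P - B)"] by simp
      show ?thesis unfolding e1 e2 by (simp add: wt_def)
    qed
    also have "\<dots> \<le> exp (- q) ^ card (P - B)"
      using exp_ge_add_one_self[of "-q"] q01 by (intro power_mono) auto
    also have "\<dots> = exp (real (card (P - B)) * (- q))" using exp_of_nat_mult[of "card (P - B)" "- q"] by simp
    also have "\<dots> = exp (- (real n - real (card B)) / real m)"
    proof -
      have "card (P - B) = card P - card B" using card_Diff_subset[OF finBB BsP] .
      moreover have "card B \<le> card P" using card_mono[OF finP BsP] .
      ultimately have "real (card (P - B)) = real n - real (card B)" using assms(4) by simp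
      then have "real (card (P - B)) * (- q) = - (real n - real (card B)) / real m"
        unfolding q_def by (simp only: mult_minus_right times_divide_eq_right mult_1_right minus_divide_left)
      then show ?thesis by (rule arg_cong)
    qed
    finally show ?thesis .
  qed
  have s1: "(\<Sum>S\<in>Pow P. sA S) = (\<Sum>A\<in>\<A>. \<Sum>S\<in>Pow P. if A \<subseteq> D S then wt q P S else 0)"
    unfolding sA_def by (rule sum.swap)
  have s2: "(\<Sum>S\<in>Pow P. sB S) = (\<Sum>B\<in>\<B>. \<Sum>S\<in>Pow P. if D S \<subseteq> B then wt q P S else 0)"
    unfolding sB_def by (rule sum.swap)
  have s3: "(\<Sum>A\<in>\<A>. \<Sum>S\<in>Pow P. if A \<subseteq> D S then wt q P S else 0)
      \<le> (\<Sum>A\<in>\<A>. (3/4::real) powr (real (card A) / real m ^ 2))"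
    by (rule sum_mono) (rule Abound)
  have s4: "(\<Sum>B\<in>\<B>. \<Sum>S\<in>Pow P. if D S \<subseteq> B then wt q P S else 0)
      \<le> (\<Sum>B\<in>\<B>. exp (- (real n - real (card B)) / real m))"
    by (rule sum_mono) (rule Bbound)
  have "1 = (\<Sum>S\<in>Pow P. wt q P S)" using wt_total[OF finP] by simp
  also have "\<dots> \<le> (\<Sum>S\<in>Pow P. sA S + sB S)" by (rule sum_mono) (rule key)
  also have "\<dots> = (\<Sum>S\<in>Pow P. sA S) + (\<Sum>S\<in>Pow P. sB S)" by (rule sum.distrib)
  finally have "1 \<le> (\<Sum>S\<in>Pow P. sA S) + (\<Sum>S\<in>Pow P. sB S)" .
  then show ?thesis using s1 s2 s3 s4 by linarith
qed

end
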